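(* Let $n\ge2$ and $\mu\in(0,\frac1n(\frac{n-1}{n})^{n-1})$. Let $\mathcal{D}(\mu)\subset\mathbb{R}^{n+1}$ be the Euclidean Delaunay unduloid with profile $f$, normalized so that $f(0)=a_-(\mu)$, and with period $T(\mu)$. Let $$a(x)=(1+f'(x)^2)^{-1/2}f'(x),$$ regarded as a function on $\mathcal{D}(\mu)$. Then: 1. $(\Delta-V)a=0$ on $\mathcal{D}(\mu)$; 2. $a$ vanishes exactly at the points $x=kT(\mu)/2$, $k\in\mathbb{Z}$; 3. $a'$ has exactly two zeros $\zeta_1(\mu),\zeta_2(\mu)$ in $[0,T(\mu)]$, and they satisfy $0<\zeta_1(\mu)<T(\mu)/2<\zeta_2(\mu)<T(\mu)$.
   Context: For $\mu\in(0,\frac1n(\frac{n-1}{n})^{n-1})$, $f$ is a nonconstant positive solution on $\mathbb{R}$ of $\mu=f^{n-1}(1+f'^2)^{-1/2}-f^n$. The unduloid $\mathcal{D}(\mu)$ is parametrized by $F(x,\omega)=(x,f(x)\omega)$, $\omega\in S^{n-1}$; it has constant mean curvature $1$ with respect to the unit normal $N=(1+f'^2)^{-1/2}(f',-\omega)$. The function $f$ oscillates between $a_-(\mu)$ and $a_+(\mu)$, the two positive roots of $X^n-X^{n-1}+\mu=0$. It is $T(\mu)$-periodic, where $T(\mu)$ is the distance between consecutive minima. $\Delta$ is the non-negative Laplace–Beltrami operator of the induced metric, and $V=\|B\|^2=n(1+(n-1)\mu^2f^{-2n})$. Note that $a=\langle N,(1,0,\dots,0)\rangle$. *)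

theory Defs
  imports "HOL-Analysis.Analysis"
begin

definition undul_roots :: "nat \<Rightarrow> real \<Rightarrow> real set" where
  "undul_roots n \<mu> = {X. X > 0 \<and> X ^ n - X ^ (n - 1) + \<mu> = 0}"

definition a_minus :: "nat \<Rightarrow> real \<Rightarrow> real" where
  "a_minus n \<mu> = Inf (undul_roots n \<mu>)"

definition a_plus :: "nat \<Rightarrow> real \<Rightarrow> real" where
  "a_plus n \<mu> = Sup (undul_roots n \<mu>)"

definition is_local_min :: "(real \<Rightarrow> real) \<Rightarrow> real \<Rightarrow> bool" where
  "is_local_min f t \<longleftrightarrow> (\<exists>e>0. \<forall>y. \<bar>y - t\<bar> < e \<longrightarrow> f t \<le> f y)"

text \<open>Period T(mu): distance between consecutive minima of the profile. With the
  normalization f(0) = a_-(mu) (a minimum), this is the first positive minimum.\<close>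
definition undul_period :: "(real \<Rightarrow> real) \<Rightarrow> real" where
  "undul_period f = Inf {t. t > 0 \<and> is_local_min f t}"

text \<open>The function a = (1+f'^2)^(-1/2) f' (the first component of the unit normal).\<close>
definition undul_a :: "(real \<Rightarrow> real) \<Rightarrow> real \<Rightarrow> real" where
  "undul_a f x = deriv f x / sqrt (1 + (deriv f x)^2)"

text \<open>Potential V = |B|^2 = n (1 + (n-1) mu^2 f^(-2n)).\<close>
definition undul_V :: "nat \<Rightarrow> real \<Rightarrow> (real \<Rightarrow> real) \<Rightarrow> real \<Rightarrow> real" where
  "undul_V n \<mu> f x = real n * (1 + (real n - 1) * \<mu>^2 / (f x) ^ (2 * n))"

text \<open>Non-negative Laplace-Beltrami operator of the induced metric
  g = (1 + f'^2) dx^2 + f^2 g_{S^(n-1)} on the hypersurface of revolution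
  F(x,omega) = (x, f(x) omega), applied to a function u depending on x only:
  Delta u = -(1/sqrt(det g)) d/dx (sqrt(det g) g^{xx} u'), sqrt(det g) = f^(n-1) sqrt(1+f'^2) (times
  the sphere density, which cancels).\<close>
definition rot_laplacian :: "nat \<Rightarrow> (real \<Rightarrow> real) \<Rightarrow> (real \<Rightarrow> real) \<Rightarrow> real \<Rightarrow> real" where
  "rot_laplacian n f u x =
     - (1 / ((f x) ^ (n - 1) * sqrt (1 + (deriv f x)^2))) *
       deriv (\<lambda>y. (f y) ^ (n - 1) / sqrt (1 + (deriv f y)^2) * deriv u y) x"

end

theory Submission
  imports Defs
begin

definition gg :: "nat \<Rightarrow> real \<Rightarrow> real \<Rightarrow> real" where "gg m \<mu> t = \<mu> / t ^ m + t"
definition dgg :: "nat \<Rightarrow> real \<Rightarrow> real \<Rightarrow> real" where "dgg m \<mu> t = 1 - real m * \<mu> / t ^ Suc m"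
definition ddgg :: "nat \<Rightarrow> real \<Rightarrow> real \<Rightarrow> real" where "ddgg m \<mu> t = real m * (real m + 1) * \<mu> / t ^ Suc (Suc m)"
definition FF :: "nat \<Rightarrow> real \<Rightarrow> real \<Rightarrow> real" where "FF m \<mu> t = - dgg m \<mu> t / (gg m \<mu> t) ^ 3"
definition DF :: "nat \<Rightarrow> real \<Rightarrow> real \<Rightarrow> real" where
  "DF m \<mu> t = (3 * (dgg m \<mu> t)^2 - ddgg m \<mu> t * gg m \<mu> t) / (gg m \<mu> t) ^ 4"

lemma pm1: "(t::real) \<noteq> 0 \<Longrightarrow> t ^ (j - Suc 0) = (if j = 0 then 1 else t ^ j / t)"
  by (cases j) auto

lemma DERIV_gg: assumes "t > 0" shows "(gg m \<mu> has_real_derivative dgg m \<mu> t) (at t)"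
  unfolding gg_def[abs_def] dgg_def using assms
  by (auto intro!: derivative_eq_intros simp: field_simps power2_eq_square pm1)

lemma DERIV_dgg: assumes "t > 0" shows "(dgg m \<mu> has_real_derivative ddgg m \<mu> t) (at t)"
  unfolding dgg_def[abs_def] ddgg_def using assms
  by (auto intro!: derivative_eq_intros simp: field_simps power2_eq_square pm1)

lemma gg_pos: "\<mu> > 0 \<Longrightarrow> t > 0 \<Longrightarrow> gg m \<mu> t > 0"
  unfolding gg_def by (intro add_pos_pos divide_pos_pos zero_less_power)

lemma DERIV_FF: assumes "t > 0" "\<mu> > 0" shows "(FF m \<mu> has_real_derivative DF m \<mu> t) (at t)"
proof -
  have "gg m \<mu> t \<noteq> 0" using gg_pos assms by (metis less_irrefl)
  then show ?thesis unfolding FF_def[abs_def] DF_def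
    by (auto intro!: derivative_eq_intros DERIV_gg DERIV_dgg assms simp: field_simps eval_nat_numeral)
qed

lemma cont_DF: assumes "\<mu> > 0" "0 < a" shows "continuous_on {a..b} (DF m \<mu>)"
proof -
  have "\<And>t. t \<ge> a \<Longrightarrow> \<mu> / t^m + t > 0" using assms by (intro add_pos_pos divide_pos_pos zero_less_power) auto
  then show ?thesis
  unfolding DF_def[abs_def] gg_def dgg_def ddgg_def using assms
  by (intro continuous_intros) (auto simp: less_imp_neq[symmetric] dest: less_imp_neq)
qed

lemma lipschitz_from_deriv:
  fixes F D :: "real \<Rightarrow> real"
  assumes "\<And>t. t \<in> {a..b} \<Longrightarrow> (F has_real_derivative D t) (at t)"
    and "continuous_on {a..b} D"
  shows "\<exists>L\<ge>0. \<forall>x\<in>{a..b}. \<forall>y\<in>{a..b}. \<bar>F x - F y\<bar> \<le> L * \<bar>x - y\<bar>"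
proof -
  have "compact (D ` {a..b})" by (rule compact_continuous_image[OF assms(2)]) simp
  then obtain B where B: "\<forall>z\<in>D ` {a..b}. norm z \<le> B" using compact_imp_bounded bounded_iff by metis
  have key: "\<bar>F y - F x\<bar> \<le> max B 0 * (y - x)" if "x \<in> {a..b}" "y \<in> {a..b}" "x < y" for x y
  proof -
    have "\<exists>z>x. z < y \<and> F y - F x = (y - x) * D z"
      by (rule MVT2) (use assms(1) that in auto)
    then obtain z where z: "x < z" "z < y" "F y - F x = (y - x) * D z" by blast
    have "z \<in> {a..b}" using z that by auto
    then have "\<bar>D z\<bar> \<le> max B 0" using B by force
    then show ?thesis using z that by (simp add: abs_mult mult.commute mult_right_mono)
  qed
  show ?thesis
  proof (intro exI[of _ "max B 0"] conjI ballI)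
    fix x y assume xy: "x \<in> {a..b}" "y \<in> {a..b}"
    show "\<bar>F x - F y\<bar> \<le> max B 0 * \<bar>x - y\<bar>"
    proof (cases x y rule: linorder_cases)
      case less then show ?thesis using key[OF xy less] by (simp add: abs_minus_commute)
    next
      case greater then show ?thesis using key[OF xy(2,1) greater] by simp
    qed simp
  qed simp
qed

lemma gronwall_uniq:
  fixes u1 v1 u2 v2 F :: "real \<Rightarrow> real"
  assumes D1: "\<And>x. (u1 has_real_derivative v1 x) (at x)" "\<And>x. (v1 has_real_derivative F (u1 x)) (at x)"
    and D2: "\<And>x. (u2 has_real_derivative v2 x) (at x)" "\<And>x. (v2 has_real_derivative F (u2 x)) (at x)"
    and S: "\<And>x. u1 x \<in> S" "\<And>x. u2 x \<in> S"
    and L: "L \<ge> 0" "\<And>a b. a \<in> S \<Longrightarrow> b \<in> S \<Longrightarrow> \<bar>F a - F b\<bar> \<le> L * \<bar>a - b\<bar>"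
    and init: "u1 x0 = u2 x0" "v1 x0 = v2 x0"
  shows "u1 x = u2 x"
proof -
  define K where "K = 1 + L"
  define E where "E y = (u1 y - u2 y)^2 + (v1 y - v2 y)^2" for y
  define E' where "E' y = 2 * (u1 y - u2 y) * (v1 y - v2 y) + 2 * (v1 y - v2 y) * (F (u1 y) - F (u2 y))" for y
  have DE: "(E has_real_derivative E' y) (at y)" for y
    unfolding E_def[abs_def] E'_def
    by (auto intro!: derivative_eq_intros D1 D2 simp: algebra_simps)
  have Enn: "E y \<ge> 0" for y unfolding E_def by simp
  have bound: "\<bar>E' y\<bar> \<le> K * E y" for y
  proof -
    define u where "u = u1 y - u2 y"
    define v where "v = v1 y - v2 y"
    define w where "w = F (u1 y) - F (u2 y)"
    have w: "\<bar>w\<bar> \<le> L * \<bar>u\<bar>" unfolding w_def u_def using L S by blast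
    have uv: "2 * \<bar>u\<bar> * \<bar>v\<bar> \<le> u^2 + v^2"
      using sum_squares_bound[of "\<bar>u\<bar>" "\<bar>v\<bar>"] by (simp add: power2_abs)
    have "\<bar>E' y\<bar> = \<bar>2 * u * v + 2 * v * w\<bar>" unfolding E'_def u_def v_def w_def by simp
    also have "\<dots> \<le> 2 * \<bar>u\<bar> * \<bar>v\<bar> + 2 * \<bar>v\<bar> * \<bar>w\<bar>" by (simp add: abs_mult abs_triangle_ineq[THEN order_trans])
    also have "\<dots> \<le> 2 * \<bar>u\<bar> * \<bar>v\<bar> + 2 * \<bar>v\<bar> * (L * \<bar>u\<bar>)"
      using w by (simp add: mult_left_mono)
    also have "\<dots> = (1 + L) * (2 * \<bar>u\<bar> * \<bar>v\<bar>)" by (simp add: algebra_simps)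
    also have "\<dots> \<le> (1 + L) * (u^2 + v^2)" using uv L by (simp add: mult_left_mono)
    finally show ?thesis unfolding K_def E_def u_def v_def by simp
  qed
  have E0: "E x0 = 0" unfolding E_def using init by simp
  have "E x = 0"
  proof (cases "x0 \<le> x")
    case True
    define \<phi> where "\<phi> y = E y * exp (- K * y)" for y
    have "\<phi> x \<le> \<phi> x0"
    proof (rule DERIV_nonpos_imp_nonincreasing[OF True])
      fix y
      have "(\<phi> has_real_derivative (E' y - K * E y) * exp (- K * y)) (at y)"
        unfolding \<phi>_def[abs_def] by (auto intro!: derivative_eq_intros DE simp: algebra_simps)
      moreover have "(E' y - K * E y) * exp (- K * y) \<le> 0"
        using bound[of y] by (intro mult_nonpos_nonneg) auto
      ultimately show "\<exists>d. (\<phi> has_real_derivative d) (at y) \<and> d \<le> 0" by blast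
    qed
    then have "E x * exp (- K * x) \<le> 0" unfolding \<phi>_def using E0 by simp
    then show ?thesis using Enn[of x] by (simp add: mult_le_0_iff)
  next
    case False
    then have le: "x \<le> x0" by simp
    define \<psi> where "\<psi> y = E y * exp (K * y)" for y
    have "\<psi> x \<le> \<psi> x0"
    proof (rule DERIV_nonneg_imp_nondecreasing[OF le])
      fix y
      have "(\<psi> has_real_derivative (E' y + K * E y) * exp (K * y)) (at y)"
        unfolding \<psi>_def[abs_def] by (auto intro!: derivative_eq_intros DE simp: algebra_simps)
      moreover have "(E' y + K * E y) * exp (K * y) \<ge> 0"
        using bound[of y] by (intro mult_nonneg_nonneg) auto
      ultimately show "\<exists>d. (\<psi> has_real_derivative d) (at y) \<and> 0 \<le> d" by blast
    qed
    then have "E x * exp (K * x) \<le> 0" unfolding \<psi>_def using E0 by simp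
    then show ?thesis using Enn[of x] by (simp add: mult_le_0_iff)
  qed
  then show ?thesis unfolding E_def by (simp add: add_nonneg_eq_0_iff)
qed
lemma h_zero:
  fixes f p q h G :: "real \<Rightarrow> real"
  assumes Df: "\<And>x. (f has_real_derivative p x) (at x)"
    and Dp: "\<And>x. (p has_real_derivative q x) (at x)"
    and hc: "continuous_on UNIV h"
    and hG: "\<And>x. p x = 0 \<Longrightarrow> q x = 0 \<Longrightarrow> h x = G (f x)"
    and ph: "\<And>x. p x * h x = 0"
    and fy: "f y \<noteq> f x0"
  shows "h x0 = 0"
proof (rule ccontr)
  assume h0: "h x0 \<noteq> 0"
  define S where "S = closed_segment x0 y"
  define K where "K = {t \<in> S. h t = 0}"
  have clK: "closed K"
  proof -
    have c1: "closed {t. h t = 0}" by (rule closed_Collect_eq[OF hc continuous_on_const])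
    have "K = S \<inter> {t. h t = 0}" unfolding K_def by auto
    then show ?thesis using closed_Int[OF closed_segment[of x0 y] c1] unfolding S_def by simp
  qed
  show False
  proof (cases "K = {}")
    case True
    have pS: "p t = 0" if "t \<in> S" for t
    proof -
      have "h t \<noteq> 0" using True that unfolding K_def by auto
      then show ?thesis using ph[of t] by simp
    qed
    have "\<exists>c. \<forall>t\<in>S. f t = c"
    proof (rule has_field_derivative_zero_constant)
      show "convex S" unfolding S_def by simp
      fix t assume "t \<in> S"
      then have "p t = 0" by (rule pS)
      then show "(f has_field_derivative 0) (at t within S)" using has_field_derivative_at_within[OF Df[of t]] by simp
    qed
    then obtain c where "\<forall>t\<in>S. f t = c" by blast
    moreover have "x0 \<in> S" "y \<in> S" unfolding S_def by auto
    ultimately show False using fy by simp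
  next
    case False
    then obtain t0 where t0: "t0 \<in> K" and mind: "\<And>t. t \<in> K \<Longrightarrow> dist x0 t0 \<le> dist x0 t"
      using distance_attains_inf[OF clK False, of x0] by blast
    have ht0: "h t0 = 0" and t0S: "t0 \<in> S" using t0 unfolding K_def by auto
    have ne: "x0 \<noteq> t0" using h0 ht0 by auto
    define U where "U = open_segment x0 t0"
    have x0S: "x0 \<in> S" unfolding S_def by simp
    have US: "closed_segment x0 t0 \<subseteq> S" unfolding S_def
      by (rule closed_segment_subset) (use t0S x0S S_def in auto)
    have pU: "p t = 0" if "t \<in> U" for t
    proof -
      have "t \<in> closed_segment x0 t0" using that unfolding U_def by (simp add: open_closed_segment)
      then have tS: "t \<in> S" using US by blast
      have d: "dist t x0 < dist x0 t0" using dist_in_open_segment[of t x0 t0] that unfolding U_def by blast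
      have "t \<notin> K"
      proof
        assume "t \<in> K"
        then have "dist x0 t0 \<le> dist x0 t" by (rule mind)
        then show False using d by (simp add: dist_commute)
      qed
      then have "h t \<noteq> 0" using tS unfolding K_def by auto
      then show ?thesis using ph[of t] by simp
    qed
    have oU: "open U" unfolding U_def open_segment_eq_real_ivl by auto
    have cU: "convex U" unfolding U_def by simp
    have qU: "q t = 0" if "t \<in> U" for t
    proof -
      have "((\<lambda>_. 0) has_real_derivative q t) (at t)"
        by (rule has_field_derivative_transform_within_open[OF Dp oU that]) (simp add: pU)
      then show ?thesis using DERIV_unique[OF _ DERIV_const] by blast
    qed
    have "\<exists>c. \<forall>t\<in>U. f t = c"
    proof (rule has_field_derivative_zero_constant[OF cU])
      fix t assume "t \<in> U"
      then have "p t = 0" by (rule pU)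
      then show "(f has_field_derivative 0) (at t within U)" using has_field_derivative_at_within[OF Df[of t]] by simp
    qed
    then obtain c where fc: "\<forall>t\<in>U. f t = c" by blast
    have hU: "\<And>t. t \<in> U \<Longrightarrow> h t = G c" using hG pU qU fc by auto
    have cl: "closure U = closed_segment x0 t0" unfolding U_def using ne by (simp add: closure_open_segment)
    have hcl: "continuous_on (closure U) h" by (rule continuous_on_subset[OF hc subset_UNIV])
    have inc: "x0 \<in> closure U" "t0 \<in> closure U" unfolding cl by auto
    have "h x0 = G c" by (rule continuous_constant_on_closure[OF hcl hU inc(1)])
    moreover have "h t0 = G c" by (rule continuous_constant_on_closure[OF hcl hU inc(2)])
    ultimately show False using h0 ht0 by simp
  qed
qed

lemma periodic_int:
  fixes \<phi> :: "real \<Rightarrow> 'b"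
  assumes per: "\<And>x. \<phi> (x + c) = \<phi> x"
  shows "\<phi> (x + of_int j * c) = \<phi> x"
proof -
  have nat: "\<phi> (y + of_nat k * c) = \<phi> y" for y k
  proof (induction k)
    case 0 then show ?case by simp
  next
    case (Suc k)
    have "\<phi> (y + of_nat (Suc k) * c) = \<phi> ((y + of_nat k * c) + c)" by (simp add: algebra_simps)
    also have "\<dots> = \<phi> y" using per Suc by simp
    finally show ?case .
  qed
  show ?thesis
  proof (cases "j \<ge> 0")
    case True
    then have "j = int (nat j)" by simp
    then show ?thesis using nat[of x "nat j"] by (metis of_int_of_nat_eq)
  next
    case False
    define k where "k = nat (- j)"
    have k: "j = - int k" using False unfolding k_def by simp
    have "\<phi> x = \<phi> ((x - of_nat k * c) + of_nat k * c)" by simp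
    also have "\<dots> = \<phi> (x - of_nat k * c)" by (rule nat)
    finally show ?thesis using k by simp
  qed
qed



locale gparams =
  fixes m :: nat and \<mu> :: real
  assumes m1: "m \<ge> 1" and mu_pos: "0 < \<mu>"
    and mu_bound: "\<mu> < (1 / real (Suc m)) * (real m / real (Suc m)) ^ m"
begin

abbreviation "g \<equiv> gg m \<mu>"
abbreviation "dg \<equiv> dgg m \<mu>"
definition "ts = root (Suc m) (real m * \<mu>)"

lemma ts_pos: "ts > 0"
  using m1 mu_pos unfolding ts_def by (auto intro!: real_root_pos_pos)

lemma ts_pow: "ts ^ Suc m = real m * \<mu>"
proof -
  have "root (Suc m) (real m * \<mu>) ^ Suc m = real m * \<mu>"
    by (rule real_root_pow_pos2) (use mu_pos in auto)
  then show ?thesis unfolding ts_def .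
qed

lemma mu_lt1: "\<mu> < 1"
proof -
  have "(real m / real (Suc m)) ^ m \<le> 1" by (intro power_le_one) auto
  then have "(1 / real (Suc m)) * (real m / real (Suc m)) ^ m \<le> 1 / real (Suc m) * 1"
    by (intro mult_left_mono) auto
  also have "\<dots> \<le> 1" by auto
  finally show ?thesis using mu_bound by linarith
qed

lemma ts_lt: "ts < real m / real (Suc m)"
proof -
  have "real m * \<mu> < real m * ((1 / real (Suc m)) * (real m / real (Suc m)) ^ m)"
    using mu_bound m1 by (intro mult_strict_left_mono) auto
  also have "\<dots> = (real m / real (Suc m)) ^ Suc m" by (simp add: field_simps)
  finally have "ts ^ Suc m < (real m / real (Suc m)) ^ Suc m" using ts_pow by simp
  then show ?thesis by (rule power_less_imp_less_base) auto
qed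

lemma ts_lt1: "ts < 1"
proof -
  have "real m / real (Suc m) < 1" by simp
  then show ?thesis using ts_lt by linarith
qed

lemma mu_lt_ts: "\<mu> < ts"
proof -
  have "\<mu> ^ Suc m < \<mu> ^ 1" using mu_pos mu_lt1 m1 by (intro power_strict_decreasing) auto
  also have "\<dots> \<le> real m * \<mu>" using m1 mu_pos by simp
  finally have "\<mu> ^ Suc m < ts ^ Suc m" using ts_pow by simp
  then show ?thesis by (rule power_less_imp_less_base) (use ts_pos in auto)
qed

lemma dg_eq: "t > 0 \<Longrightarrow> dg t = 1 - (ts / t) ^ Suc m"
  unfolding dgg_def using ts_pow by (simp add: power_divide)

lemma dg_neg: "0 < t \<Longrightarrow> t < ts \<Longrightarrow> dg t < 0"
proof -
  assume t: "0 < t" "t < ts"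
  then have "1 < ts / t" by simp
  then have "1 < (ts / t) ^ Suc m" by (intro one_less_power) auto
  then show ?thesis using dg_eq t by simp
qed

lemma dg_pos: "0 < t \<Longrightarrow> ts < t \<Longrightarrow> dg t > 0"
proof -
  assume t: "0 < t" "ts < t"
  then have "ts / t < 1" "0 \<le> ts / t" using ts_pos by auto
  then have "(ts / t) ^ Suc m < 1 ^ Suc m" by (intro power_strict_mono) auto
  then show ?thesis using dg_eq t by simp
qed

lemma dg_zero_iff: assumes "0 < t" shows "dg t = 0 \<longleftrightarrow> t = ts"
proof (cases t ts rule: linorder_cases)
  case less then show ?thesis using dg_neg[OF assms] by auto
next
  case equal then show ?thesis using dg_eq[OF assms] ts_pos by simp
next
  case greater then show ?thesis using dg_pos[OF assms] by auto
qed

lemma g_cont: "0 < a \<Longrightarrow> continuous_on {a..b} g"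
  by (rule DERIV_continuous_on[of _ _ dg]) (rule has_field_derivative_at_within[OF DERIV_gg], auto)

lemma g_dec: assumes "0 < x" "x < y" "y \<le> ts" shows "g y < g x"
proof (rule DERIV_neg_imp_decreasing_open[OF assms(2)])
  fix t assume t: "x < t" "t < y"
  then have "t > 0" "t < ts" using assms by auto
  then show "\<exists>d. (g has_real_derivative d) (at t) \<and> d < 0"
    using DERIV_gg[of t m \<mu>] dg_neg[of t] by (intro exI[of _ "dg t"] conjI)
next
  show "continuous_on {x..y} g" by (rule g_cont) (rule assms(1))
qed

lemma g_inc: assumes "ts \<le> x" "x < y" shows "g x < g y"
proof (rule DERIV_pos_imp_increasing_open[OF assms(2)])
  fix t assume t: "x < t" "t < y"
  then have "t > 0" "ts < t" using assms ts_pos by auto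
  then show "\<exists>d. (g has_real_derivative d) (at t) \<and> 0 < d"
    using DERIV_gg[of t m \<mu>] dg_pos[of t] by (intro exI[of _ "dg t"] conjI)
next
  show "continuous_on {x..y} g" by (rule g_cont) (use assms ts_pos in auto)
qed

lemma g_ts: "g ts < 1"
proof -
  have "\<mu> / ts ^ m = ts / real m"
    using ts_pow ts_pos m1 by (simp add: field_simps)
  then have "g ts = ts * (real (Suc m) / real m)" unfolding gg_def using m1 by (simp add: field_simps)
  also have "\<dots> < real m / real (Suc m) * (real (Suc m) / real m)"
    using ts_lt m1 by (intro mult_strict_right_mono) auto
  also have "\<dots> = 1" using m1 by simp
  finally show ?thesis .
qed

lemma g_mu: "g \<mu> > 1"
proof -
  have "\<mu> ^ m \<le> \<mu> ^ 1" using mu_pos mu_lt1 m1 by (intro power_decreasing) auto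
  then have "1 \<le> \<mu> / \<mu> ^ m" using mu_pos by (simp add: le_divide_eq)
  then show ?thesis unfolding gg_def using mu_pos by linarith
qed

lemma g_1: "g 1 > 1" unfolding gg_def using mu_pos by simp

lemma roots_exist: "\<exists>r1 r2. \<mu> < r1 \<and> r1 < ts \<and> ts < r2 \<and> r2 < 1 \<and> g r1 = 1 \<and> g r2 = 1"
proof -
  obtain r1 where r1: "r1 \<ge> \<mu>" "r1 \<le> ts" "g r1 = 1"
    using IVT2'[of g ts 1 \<mu>] g_ts g_mu mu_lt_ts g_cont[OF mu_pos, of ts] by auto
  obtain r2 where r2: "r2 \<ge> ts" "r2 \<le> 1" "g r2 = 1"
    using IVT'[of g ts 1 1] g_ts g_1 ts_lt1 g_cont[OF ts_pos, of 1] by auto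
  have "r1 \<noteq> \<mu>" "r1 \<noteq> ts" "r2 \<noteq> ts" "r2 \<noteq> 1" using r1 r2 g_ts g_mu g_1 by auto
  then show ?thesis using r1 r2 by (intro exI[of _ r1] exI[of _ r2]) auto
qed

definition "r1 = a_minus (Suc m) \<mu>"
definition "r2 = a_plus (Suc m) \<mu>"

lemma g_eq1_iff_root: "X > 0 \<Longrightarrow> g X = 1 \<longleftrightarrow> X ^ Suc m - X ^ (Suc m - 1) + \<mu> = 0"
proof -
  assume X: "X > 0"
  have "g X = 1 \<longleftrightarrow> \<mu> / X ^ m + X = 1" unfolding gg_def by simp
  also have "\<dots> \<longleftrightarrow> X ^ m = \<mu> + X * X ^ m" using X by (simp add: field_simps)
  also have "\<dots> \<longleftrightarrow> X ^ Suc m - X ^ (Suc m - 1) + \<mu> = 0" by auto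
  finally show ?thesis .
qed

lemma roots: "\<mu> < r1 \<and> r1 < ts \<and> ts < r2 \<and> r2 < 1 \<and> g r1 = 1 \<and> g r2 = 1"
proof -
  obtain a b where ab: "\<mu> < a" "a < ts" "ts < b" "b < 1" "g a = 1" "g b = 1" using roots_exist by blast
  have apos: "a > 0" using ab mu_pos by simp
  have "undul_roots (Suc m) \<mu> = {a, b}"
  proof (rule set_eqI)
    fix X
    show "X \<in> undul_roots (Suc m) \<mu> \<longleftrightarrow> X \<in> {a, b}"
    proof
      assume "X \<in> undul_roots (Suc m) \<mu>"
      then have X: "X > 0" "g X = 1" unfolding undul_roots_def using g_eq1_iff_root by auto
      show "X \<in> {a, b}"
      proof (rule ccontr)
        assume "X \<notin> {a, b}"
        then have ne: "X \<noteq> a" "X \<noteq> b" by auto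
        consider "X < a" | "a < X \<and> X \<le> ts" | "ts \<le> X \<and> X < b" | "b < X" using ne by linarith
        then show False
        proof cases
          case 1 then show ?thesis using g_dec[of X a] X ab by simp
        next
          case 2 then show ?thesis using g_dec[of a X] X ab apos by simp
        next
          case 3 then show ?thesis using g_inc[of X b] X ab by simp
        next
          case 4 then show ?thesis using g_inc[of b X] X ab by simp
        qed
      qed
    next
      assume "X \<in> {a, b}"
      then show "X \<in> undul_roots (Suc m) \<mu>" unfolding undul_roots_def
        using g_eq1_iff_root ab apos by auto
    qed
  qed
  moreover have "a < b" using ab by simp
  ultimately have "r1 = a" "r2 = b" unfolding r1_def r2_def a_minus_def a_plus_def
    by (auto intro!: cInf_eq_minimum cSup_eq_maximum)
  then show ?thesis using ab by simp
qed

lemma r1_pos: "r1 > 0" using roots mu_pos by linarith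

lemma g_gt_left: "0 < t \<Longrightarrow> t < r1 \<Longrightarrow> g t > 1"
  using g_dec[of t r1] roots by auto
lemma g_lt_mid: "r1 < t \<Longrightarrow> t < r2 \<Longrightarrow> g t < 1"
proof -
  assume t: "r1 < t" "t < r2"
  show ?thesis
  proof (cases "t \<le> ts")
    case True then show ?thesis using g_dec[of r1 t] roots r1_pos t by auto
  next
    case False then show ?thesis using g_inc[of t r2] roots t by auto
  qed
qed
lemma g_gt_right: "r2 < t \<Longrightarrow> g t > 1"
  using g_inc[of r2 t] roots by auto

lemma g_lt1_iff: "t > 0 \<Longrightarrow> g t < 1 \<longleftrightarrow> r1 < t \<and> t < r2"
  using g_gt_left[of t] g_lt_mid[of t] g_gt_right[of t] roots by (cases "t < r1"; cases "t = r1"; cases "t < r2"; cases "t = r2") auto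

lemma g_le1_iff: "t > 0 \<Longrightarrow> g t \<le> 1 \<longleftrightarrow> r1 \<le> t \<and> t \<le> r2"
  using g_gt_left[of t] g_lt_mid[of t] g_gt_right[of t] roots by (cases "t < r1"; cases "t = r1"; cases "t < r2"; cases "t = r2") auto

lemma g_eq1_iff: "t > 0 \<Longrightarrow> g t = 1 \<longleftrightarrow> t = r1 \<or> t = r2"
  using g_gt_left[of t] g_lt_mid[of t] g_gt_right[of t] roots by (cases "t < r1"; cases "t = r1"; cases "t < r2"; cases "t = r2") auto

end



locale undul = gparams +
  fixes f :: "real \<Rightarrow> real"
  assumes Df: "\<And>x. (f has_real_derivative deriv f x) (at x)"
    and Dp: "\<And>x. (deriv f has_real_derivative deriv (deriv f) x) (at x)"
    and Dq: "\<And>x. deriv (deriv f) differentiable (at x)"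
    and fpos: "\<And>x. f x > 0"
    and nonconst: "\<exists>x y. f x \<noteq> f y"
    and ode: "\<And>x. \<mu> = f x ^ m / sqrt (1 + (deriv f x)^2) - f x ^ Suc m"
    and f0: "f 0 = r1"
begin

abbreviation "p \<equiv> deriv f"
abbreviation "q \<equiv> deriv (deriv f)"
abbreviation "F \<equiv> FF m \<mu>"

lemma f_cont: "continuous_on UNIV f"
  by (rule continuous_at_imp_continuous_on) (use DERIV_isCont[OF Df] in blast)
lemma p_cont: "continuous_on UNIV p"
  by (rule continuous_at_imp_continuous_on) (use DERIV_isCont[OF Dp] in blast)
lemma q_cont: "continuous_on UNIV q"
  by (rule continuous_at_imp_continuous_on) (use differentiable_imp_continuous_within[OF Dq] in blast)

lemma onep: "1 + (p x)^2 > 0"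
proof -
  have "0 \<le> (p x)^2" by simp
  then show ?thesis by linarith
qed
lemma onep_ne: "1 + (p x)^2 \<noteq> 0" using onep[of x] by linarith
lemma sq_ge1: "sqrt (1 + (p x)^2) \<ge> 1" by simp
lemma sq_pos: "sqrt (1 + (p x)^2) > 0" using sq_ge1[of x] by linarith

lemma s_eq: "1 / sqrt (1 + (p x)^2) = g (f x)"
proof -
  define A where "A = 1 / sqrt (1 + (p x)^2)"
  have "\<mu> = f x ^ m * A - f x * f x ^ m" using ode[of x] unfolding A_def by simp
  then have "A = \<mu> / f x ^ m + f x" using fpos[of x] by (simp add: field_simps)
  then show ?thesis unfolding A_def gg_def by simp
qed

lemma f_range: "r1 \<le> f x \<and> f x \<le> r2"
proof -
  have "1 / sqrt (1 + (p x)^2) \<le> 1" using sq_ge1[of x] onep[of x] by (simp add: divide_le_eq_1)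
  then show ?thesis using s_eq[of x] g_le1_iff[OF fpos[of x]] by simp
qed

lemma p_zero_iff: "p x = 0 \<longleftrightarrow> f x = r1 \<or> f x = r2"
proof -
  have "p x = 0 \<longleftrightarrow> 1 / sqrt (1 + (p x)^2) = 1" using onep_ne[of x] by simp
  then show ?thesis using s_eq[of x] g_eq1_iff[OF fpos[of x]] by simp
qed

lemma Ds: "((\<lambda>x. 1 / sqrt (1 + (p x)^2)) has_real_derivative
    - (p x * q x) / ((1 + (p x)^2) * sqrt (1 + (p x)^2))) (at x)"
proof -
  have "1 + (p x)^2 > 0" by (rule onep)
  then show ?thesis using sq_pos[of x]
    by (auto intro!: derivative_eq_intros Dp simp: field_simps power2_eq_square)
qed

lemma Dgf: "((\<lambda>x. g (f x)) has_real_derivative dg (f x) * p x) (at x)"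
  by (rule DERIV_chain2[OF DERIV_gg[OF fpos] Df])

definition "hh x = q x / ((1 + (p x)^2) * sqrt (1 + (p x)^2)) + dg (f x)"

lemma ph: "p x * hh x = 0"
proof -
  have "(\<lambda>x. 1 / sqrt (1 + (p x)^2)) = (\<lambda>x. g (f x))" using s_eq by auto
  then have "- (p x * q x) / ((1 + (p x)^2) * sqrt (1 + (p x)^2)) = dg (f x) * p x"
    using Ds[of x] Dgf[of x] DERIV_unique by metis
  then show ?thesis unfolding hh_def by (simp add: field_simps)
qed

lemma hh_cont: "continuous_on UNIV hh"
proof -
  have "\<And>x. (1 + (p x)^2) * sqrt (1 + (p x)^2) \<noteq> 0" using sq_pos onep_ne by simp
  moreover have "\<And>x. f x ^ Suc m \<noteq> 0" using fpos by (simp add: less_imp_neq[symmetric])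
  ultimately show ?thesis unfolding hh_def[abs_def] dgg_def
    by (intro continuous_intros f_cont p_cont q_cont) auto
qed

lemma hh_zero: "hh x = 0"
proof -
  obtain a b where ab: "f a \<noteq> f b" using nonconst by blast
  obtain y where y: "f y \<noteq> f x" using ab by metis
  show ?thesis
    by (rule h_zero[OF Df Dp hh_cont _ ph y, of dg]) (simp add: hh_def)
qed

lemma q_eq: "q x = - dg (f x) * ((1 + (p x)^2) * sqrt (1 + (p x)^2))"
proof -
  have D: "(1 + (p x)^2) * sqrt (1 + (p x)^2) \<noteq> 0" using sq_pos[of x] onep_ne[of x] by simp
  have "q x / ((1 + (p x)^2) * sqrt (1 + (p x)^2)) = - dg (f x)"
    using hh_zero[of x] unfolding hh_def by simp
  then show ?thesis using D by (simp add: divide_eq_eq)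
qed

lemma q_F: "q x = F (f x)"
proof -
  have g: "g (f x) = 1 / sqrt (1 + (p x)^2)" using s_eq by simp
  have "sqrt (1 + (p x)^2) ^ 3 = (1 + (p x)^2) * sqrt (1 + (p x)^2)"
    using onep[of x] by (simp add: eval_nat_numeral)
  then show ?thesis unfolding FF_def g q_eq using sq_pos[of x] by (simp add: power_one_over field_simps)
qed

lemma a_eq: "undul_a f = (\<lambda>x. p x / sqrt (1 + (p x)^2))"
  unfolding undul_a_def by auto

lemma Da: "(undul_a f has_real_derivative - dg (f x)) (at x)"
proof -
  have pos: "1 + (p x)^2 > 0" by (rule onep)
  have "((\<lambda>x. p x / sqrt (1 + (p x)^2)) has_real_derivative q x / ((1 + (p x)^2) * sqrt (1 + (p x)^2))) (at x)"
    using pos sq_pos[of x]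
    by (auto intro!: derivative_eq_intros Dp simp: field_simps power2_eq_square)
  moreover have "q x / ((1 + (p x)^2) * sqrt (1 + (p x)^2)) = - dg (f x)"
    using hh_zero[of x] unfolding hh_def by simp
  ultimately show ?thesis unfolding a_eq by simp
qed

lemma deriv_a: "deriv (undul_a f) x = - dg (f x)"
  by (rule DERIV_imp_deriv[OF Da])


lemma lap: "rot_laplacian (Suc m) f (undul_a f) x - undul_V (Suc m) \<mu> f x * undul_a f x = 0"
proof -
  define \<Phi> where "\<Phi> y = (\<mu> + f y ^ Suc m) * (real m * \<mu> / f y ^ Suc m - 1)" for y
  have inner: "(\<lambda>y. f y ^ (Suc m - 1) / sqrt (1 + (deriv f y)^2) * deriv (undul_a f) y) = \<Phi>"
  proof
    fix y
    have "f y ^ m / sqrt (1 + (p y)^2) = f y ^ m * g (f y)" using s_eq[of y] by (simp add: divide_inverse)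
    also have "\<dots> = \<mu> + f y ^ Suc m" unfolding gg_def using fpos[of y] by (simp add: field_simps)
    finally show "f y ^ (Suc m - 1) / sqrt (1 + (deriv f y)^2) * deriv (undul_a f) y = \<Phi> y"
      unfolding \<Phi>_def deriv_a dgg_def by simp
  qed
  have fx: "f x \<noteq> 0" using fpos[of x] by simp
  have D\<Phi>: "(\<Phi> has_real_derivative - real (Suc m) * p x * (f x ^ m + real m * \<mu>^2 / f x ^ Suc (Suc m))) (at x)"
    unfolding \<Phi>_def[abs_def] using fx
    by (auto intro!: derivative_eq_intros Df simp: field_simps power2_eq_square pm1)
  have dd: "deriv \<Phi> x = - real (Suc m) * p x * (f x ^ m + real m * \<mu>^2 / f x ^ Suc (Suc m))"
    by (rule DERIV_imp_deriv[OF D\<Phi>])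
  have p2: "f x ^ (2 * Suc m) = f x ^ Suc m * f x ^ Suc m" by (simp add: mult_2 power_add)
  show ?thesis
    unfolding rot_laplacian_def undul_V_def inner dd p2 using fx sq_pos[of x] unfolding a_eq
    by (simp add: field_simps power2_eq_square)
qed

end



context undul
begin

lemma p0: "p 0 = 0" using p_zero_iff f0 by simp

lemma q0: "q 0 > 0"
proof -
  have "dg r1 < 0" using dg_neg r1_pos roots by simp
  then show ?thesis using q_eq[of 0] p0 f0 by simp
qed

lemma d0_ex: "\<exists>d0>0. \<forall>t. 0 < t \<and> t \<le> d0 \<longrightarrow> p t > 0"
proof -
  obtain d where d: "d > 0" "\<And>h. h > 0 \<Longrightarrow> h < d \<Longrightarrow> p 0 < p (0 + h)"
    using DERIV_pos_inc_right[OF Dp q0] by blast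
  show ?thesis using d p0 by (intro exI[of _ "d/2"]) auto
qed

lemma f_incr: assumes "a < b" "\<And>t. a < t \<Longrightarrow> t < b \<Longrightarrow> p t > 0" shows "f a < f b"
proof (rule DERIV_pos_imp_increasing_open[OF assms(1)])
  fix t assume "a < t" "t < b"
  then show "\<exists>y. (f has_real_derivative y) (at t) \<and> 0 < y" using Df[of t] assms(2) by blast
next
  show "continuous_on {a..b} f" using f_cont continuous_on_subset by blast
qed

lemma f_mono: assumes "a \<le> b" "\<And>t. a < t \<Longrightarrow> t < b \<Longrightarrow> p t > 0" shows "f a \<le> f b"
  using f_incr[of a b] assms by (cases "a = b") auto

lemma F_lip: "\<exists>L\<ge>0. \<forall>x\<in>{r1..r2}. \<forall>y\<in>{r1..r2}. \<bar>F x - F y\<bar> \<le> L * \<bar>x - y\<bar>"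
proof (rule lipschitz_from_deriv[of r1 r2 F "DF m \<mu>"])
  fix t assume "t \<in> {r1..r2}"
  then have "t > 0" using r1_pos by auto
  then show "(F has_real_derivative DF m \<mu> t) (at t)" by (rule DERIV_FF) (rule mu_pos)
next
  show "continuous_on {r1..r2} (DF m \<mu>)" by (rule cont_DF[OF mu_pos r1_pos])
qed

lemma F_r2: "F r2 < 0"
proof -
  have "dg r2 > 0" using dg_pos roots ts_pos by simp
  then show ?thesis unfolding FF_def using roots by simp
qed

lemma zero_exists:
  assumes d0: "d0 > 0" "\<And>t. 0 < t \<Longrightarrow> t \<le> d0 \<Longrightarrow> p t > 0"
  shows "\<exists>z\<ge>d0. p z = 0"
proof (rule ccontr)
  assume nz: "\<not> (\<exists>z\<ge>d0. p z = 0)"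
  have ppos: "p z > 0" if z: "z \<ge> d0" for z
  proof (rule ccontr)
    assume "\<not> p z > 0"
    then have "p z \<le> 0" by simp
    moreover have "p d0 \<ge> 0" using d0 by (simp add: less_imp_le)
    ultimately obtain w where "w \<ge> d0" "w \<le> z" "p w = 0"
      using IVT2'[of p z 0 d0] z continuous_on_subset[OF p_cont] by blast
    then show False using nz by blast
  qed
  have fmono: "f x \<le> f y" if "d0 \<le> x" "x \<le> y" for x y
    by (rule f_mono) (use that ppos in auto)
  obtain L where L: "L \<ge> 0" "\<And>x y. x \<in> {r1..r2} \<Longrightarrow> y \<in> {r1..r2} \<Longrightarrow> \<bar>F x - F y\<bar> \<le> L * \<bar>x - y\<bar>"
    using F_lip by blast
  define c where "c = - F r2 / 2"
  have c: "c > 0" using F_r2 unfolding c_def by simp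
  define \<delta> where "\<delta> = c / (L + 1)"
  have \<delta>: "\<delta> > 0" using c L unfolding \<delta>_def by simp
  have L\<delta>: "L * \<delta> < c"
  proof -
    have "L * \<delta> = c * (L / (L + 1))" unfolding \<delta>_def by simp
    also have "\<dots> < c * 1" using c L by (intro mult_strict_left_mono) auto
    finally show ?thesis by simp
  qed
  show False
  proof (cases "\<exists>x1\<ge>d0. f x1 > r2 - \<delta>")
    case True
    then obtain x1 where x1: "x1 \<ge> d0" "f x1 > r2 - \<delta>" by blast
    have qneg: "q x < - c" if "x \<ge> x1" for x
    proof -
      have fx: "f x > r2 - \<delta>" using fmono[of x1 x] x1 that by simp
      have fr: "f x \<in> {r1..r2}" using f_range[of x] by simp
      have r2r: "r2 \<in> {r1..r2}" using roots by simp
      have "\<bar>F (f x) - F r2\<bar> \<le> L * \<bar>f x - r2\<bar>" by (rule L(2)[OF fr r2r])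
      also have "\<dots> \<le> L * \<delta>" using fx fr L(1) by (intro mult_left_mono) auto
      finally have "F (f x) < F r2 + c" using L\<delta> by linarith
      then show ?thesis using q_F[of x] c_def by simp
    qed
    define \<Lambda> where "\<Lambda> = p x1 / c + 1"
    have \<Lambda>: "\<Lambda> > 0" unfolding \<Lambda>_def using ppos[OF x1(1)] c by (simp add: add_pos_pos)
    have "\<exists>\<xi>>x1. \<xi> < x1 + \<Lambda> \<and> p (x1 + \<Lambda>) - p x1 = (x1 + \<Lambda> - x1) * q \<xi>"
      by (rule MVT2) (use \<Lambda> Dp in auto)
    then obtain \<xi> where \<xi>: "\<xi> > x1" "p (x1 + \<Lambda>) - p x1 = \<Lambda> * q \<xi>" by auto
    have "\<Lambda> * q \<xi> < \<Lambda> * (- c)" using qneg[of \<xi>] \<xi> \<Lambda> by (intro mult_strict_left_mono) auto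
    also have "\<Lambda> * (- c) = - p x1 - c" unfolding \<Lambda>_def using c by (simp add: field_simps)
    finally have "p (x1 + \<Lambda>) < 0" using \<xi> c by linarith
    moreover have "p (x1 + \<Lambda>) > 0" using ppos[of "x1 + \<Lambda>"] x1 \<Lambda> by simp
    ultimately show False by simp
  next
    case False
    then have up: "f x \<le> r2 - \<delta>" if "x \<ge> d0" for x using that by (simp add: not_less)
    define c0 where "c0 = f d0"
    have "f 0 < f d0" by (rule f_incr) (use d0 in auto)
    then have c0r1: "c0 > r1" using f0 unfolding c0_def by simp
    have c0up: "c0 \<le> r2 - \<delta>" using up[of d0] unfolding c0_def by simp
    have c0pos: "c0 > 0" using c0r1 r1_pos by simp
    obtain w where w: "w \<in> {c0..r2 - \<delta>}" "\<And>y. y \<in> {c0..r2 - \<delta>} \<Longrightarrow> g y \<le> g w"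
      using continuous_attains_sup[of "{c0..r2 - \<delta>}" g] c0up g_cont[OF c0pos, of "r2 - \<delta>"] by auto
    define \<gamma> where "\<gamma> = g w"
    have \<gamma>1: "\<gamma> < 1" unfolding \<gamma>_def using w(1) c0r1 \<delta> by (intro g_lt_mid) auto
    have \<gamma>0: "\<gamma> > 0" unfolding \<gamma>_def using w(1) c0pos by (intro gg_pos mu_pos) auto
    define \<kappa> where "\<kappa> = 1 / \<gamma>^2 - 1"
    have \<kappa>: "\<kappa> > 0" unfolding \<kappa>_def using \<gamma>1 \<gamma>0
      by (simp add: power_less_one_iff less_divide_eq power2_eq_square)
      (metis mult_strict_mono' less_imp_le mult_1 )
    have plow: "p x \<ge> sqrt \<kappa>" if x: "x \<ge> d0" for x
    proof -
      have "f x \<in> {c0..r2 - \<delta>}" using up[OF x] fmono[of d0 x] x unfolding c0_def by simp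
      then have "g (f x) \<le> \<gamma>" using w(2) unfolding \<gamma>_def by blast
      then have le: "1 / sqrt (1 + (p x)^2) \<le> \<gamma>" using s_eq by simp
      define S where "S = sqrt (1 + (p x)^2)"
      have S: "S > 0" unfolding S_def by (rule sq_pos)
      have "1 \<le> \<gamma> * S" using le S unfolding S_def[symmetric] by (simp add: divide_le_eq mult.commute)
      then have "1 / \<gamma> \<le> S" using \<gamma>0 by (simp add: divide_le_eq mult.commute)
      then have "(1 / \<gamma>)^2 \<le> S^2" using \<gamma>0 by (intro power_mono) auto
      also have "S^2 = 1 + (p x)^2" unfolding S_def using onep[of x] by simp
      finally have "\<kappa> \<le> (p x)^2" unfolding \<kappa>_def by (simp add: power_divide)
      then have "sqrt \<kappa> \<le> sqrt ((p x)^2)" by (rule real_sqrt_le_mono)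
      then show ?thesis using ppos[OF x] by simp
    qed
    define \<Lambda> where "\<Lambda> = (r2 - c0) / sqrt \<kappa> + 1"
    have sk: "sqrt \<kappa> > 0" using \<kappa> by simp
    have \<Lambda>: "\<Lambda> > 0" unfolding \<Lambda>_def using sk c0up \<delta> by (simp add: add_pos_nonneg)
    have "\<exists>\<xi>>d0. \<xi> < d0 + \<Lambda> \<and> f (d0 + \<Lambda>) - f d0 = (d0 + \<Lambda> - d0) * p \<xi>"
      by (rule MVT2) (use \<Lambda> Df in auto)
    then obtain \<xi> where \<xi>: "\<xi> > d0" "f (d0 + \<Lambda>) - f d0 = \<Lambda> * p \<xi>" by auto
    have "\<Lambda> * sqrt \<kappa> \<le> \<Lambda> * p \<xi>" using plow[of \<xi>] \<xi> \<Lambda> by (intro mult_left_mono) auto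
    moreover have "\<Lambda> * sqrt \<kappa> = r2 - c0 + sqrt \<kappa>" unfolding \<Lambda>_def using sk by (simp add: field_simps)
    ultimately have "f (d0 + \<Lambda>) > r2" using \<xi> sk unfolding c0_def by linarith
    then show False using f_range[of "d0 + \<Lambda>"] by simp
  qed
qed

lemma T1_ex: "\<exists>T1>0. p T1 = 0 \<and> (\<forall>t. 0 < t \<and> t < T1 \<longrightarrow> p t > 0)"
proof -
  obtain d0 where d0: "d0 > 0" "\<And>t. 0 < t \<Longrightarrow> t \<le> d0 \<Longrightarrow> p t > 0" using d0_ex by blast
  define Z where "Z = {t. d0 \<le> t \<and> p t = 0}"
  have Zne: "Z \<noteq> {}" using zero_exists[OF d0] unfolding Z_def by auto
  have Zcl: "closed Z"
  proof -
    have "Z = {t. d0 \<le> t} \<inter> {t. p t = 0}" unfolding Z_def by auto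
    moreover have "closed {t. p t = 0}" by (rule closed_Collect_eq[OF p_cont continuous_on_const])
    moreover have "closed {t::real. d0 \<le> t}" by (rule closed_Collect_le[OF continuous_on_const continuous_on_id])
    ultimately show ?thesis by auto
  qed
  have Zbdd: "bdd_below Z" unfolding Z_def by (rule bdd_belowI[of _ d0]) auto
  define T1 where "T1 = Inf Z"
  have T1Z: "T1 \<in> Z" unfolding T1_def by (rule closed_contains_Inf[OF Zne Zbdd Zcl])
  have T1low: "T1 \<le> z" if "z \<in> Z" for z unfolding T1_def by (rule cInf_lower[OF that Zbdd])
  have pos: "p t > 0" if t: "0 < t" "t < T1" for t
  proof (cases "t \<le> d0")
    case True then show ?thesis using d0 t by simp
  next
    case False
    have "p t \<noteq> 0"
    proof
      assume "p t = 0"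
      then have "t \<in> Z" using False unfolding Z_def by simp
      then show False using T1low t by fastforce
    qed
    moreover have "\<not> p t < 0"
    proof
      assume "p t < 0"
      moreover have "p d0 \<ge> 0" using d0 by (simp add: less_imp_le)
      ultimately obtain w where "w \<ge> d0" "w \<le> t" "p w = 0"
        using IVT2'[of p t 0 d0] False continuous_on_subset[OF p_cont] by fastforce
      then have "w \<in> Z" unfolding Z_def by simp
      then show False using T1low[of w] \<open>w \<le> t\<close> t by simp
    qed
    ultimately show ?thesis by simp
  qed
  show ?thesis using T1Z d0 pos unfolding Z_def by (intro exI[of _ T1]) auto
qed

definition "T1 = (SOME T. T > 0 \<and> p T = 0 \<and> (\<forall>t. 0 < t \<and> t < T \<longrightarrow> p t > 0))"

lemma T1: "T1 > 0" "p T1 = 0" "\<And>t. 0 < t \<Longrightarrow> t < T1 \<Longrightarrow> p t > 0"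
  using someI_ex[OF T1_ex] unfolding T1_def[symmetric] by auto

lemma f_strict: "0 \<le> x \<Longrightarrow> x < y \<Longrightarrow> y \<le> T1 \<Longrightarrow> f x < f y"
  by (rule f_incr) (use T1 in auto)

lemma fT1: "f T1 = r2"
proof -
  have "f 0 < f T1" using f_strict[of 0 T1] T1 by simp
  then show ?thesis using p_zero_iff[of T1] T1 f0 by auto
qed

end



context undul
begin

lemma refl_D: "((\<lambda>x. f (c - x)) has_real_derivative - p (c - x)) (at x)"
proof -
  have "((\<lambda>x. c - x) has_real_derivative -1) (at x)" by (auto intro!: derivative_eq_intros)
  from DERIV_chain2[OF Df[of "c - x"] this] show ?thesis by simp
qed

lemma refl_Dp: "((\<lambda>x. - p (c - x)) has_real_derivative q (c - x)) (at x)"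
proof -
  have "((\<lambda>x. c - x) has_real_derivative -1) (at x)" by (auto intro!: derivative_eq_intros)
  from DERIV_chain2[OF Dp[of "c - x"] this] have "((\<lambda>x. p (c - x)) has_real_derivative - q (c - x)) (at x)" by simp
  from DERIV_minus[OF this] show ?thesis by simp
qed

lemma refl: assumes "p a = 0" shows "f (2 * a - x) = f x"
proof -
  obtain L where L: "L \<ge> 0" "\<forall>x\<in>{r1..r2}. \<forall>y\<in>{r1..r2}. \<bar>F x - F y\<bar> \<le> L * \<bar>x - y\<bar>"
    using F_lip by blast
  have A1: "\<And>x. (f has_real_derivative p x) (at x)" by (rule Df)
  have A2: "\<And>x. (p has_real_derivative F (f x)) (at x)" using Dp q_F by simp
  have A3: "\<And>x. ((\<lambda>x. f (2 * a - x)) has_real_derivative - p (2 * a - x)) (at x)" by (rule refl_D)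
  have A4: "\<And>x. ((\<lambda>x. - p (2 * a - x)) has_real_derivative F (f (2 * a - x))) (at x)"
    using refl_Dp q_F by simp
  have A5: "\<And>x. f x \<in> {r1..r2}" using f_range by simp
  have A6: "\<And>x. f (2 * a - x) \<in> {r1..r2}" using f_range by simp
  have A7: "\<And>x y. x \<in> {r1..r2} \<Longrightarrow> y \<in> {r1..r2} \<Longrightarrow> \<bar>F x - F y\<bar> \<le> L * \<bar>x - y\<bar>" using L(2) by blast
  have A8: "f a = f (2 * a - a)" by simp
  have A9: "p a = - p (2 * a - a)" using assms by simp
  have "f x = f (2 * a - x)" by (rule gronwall_uniq[OF A1 A2 A3 A4 A5 A6 L(1) A7 A8 A9])
  then show ?thesis by simp
qed

lemma p_refl: assumes "p a = 0" shows "p (2 * a - x) = - p x"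
proof -
  have "(\<lambda>x. f (2 * a - x)) = f" using refl[OF assms] by auto
  then have "(f has_real_derivative - p (2 * a - x)) (at x)" using refl_D[of "2 * a" x] by simp
  then have "- p (2 * a - x) = p x" using Df[of x] DERIV_unique by blast
  then show ?thesis by simp
qed

lemma f_even: "f (- x) = f x" using refl[OF p0, of x] by simp

lemma f_per: "f (x + 2 * T1) = f x"
proof -
  have "f (2 * T1 - (- x)) = f (- x)" by (rule refl[OF T1(2)])
  then show ?thesis using f_even by (simp add: add.commute)
qed

lemma p_per: "p (x + 2 * T1) = p x"
proof -
  have "((\<lambda>x. x + 2 * T1) has_real_derivative 1) (at x)" by (auto intro!: derivative_eq_intros)
  from DERIV_chain2[OF Df[of "x + 2 * T1"] this]
  have "((\<lambda>x. f (x + 2 * T1)) has_real_derivative p (x + 2 * T1)) (at x)" by simp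
  moreover have "(\<lambda>x. f (x + 2 * T1)) = f" using f_per by auto
  ultimately have "(f has_real_derivative p (x + 2 * T1)) (at x)" by simp
  then show ?thesis using Df[of x] DERIV_unique by blast
qed

lemma p_per_int: "p (x + of_int j * (2 * T1)) = p x"
  by (rule periodic_int) (rule p_per)

lemma f_per_int: "f (x + of_int j * (2 * T1)) = f x"
  by (rule periodic_int) (rule f_per)

lemma p_neg: "T1 < y \<Longrightarrow> y < 2 * T1 \<Longrightarrow> p y < 0"
  using p_refl[OF T1(2), of y] T1(3)[of "2 * T1 - y"] by simp

lemma p_zero_base: "0 \<le> y \<Longrightarrow> y < 2 * T1 \<Longrightarrow> p y = 0 \<longleftrightarrow> y = 0 \<or> y = T1"
  using T1(3)[of y] p_neg[of y] p0 T1(2) by (cases "y = 0"; cases "y < T1"; cases "y = T1") auto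

lemma p_zero_char: "p x = 0 \<longleftrightarrow> (\<exists>k::int. x = of_int k * T1)"
proof
  assume px: "p x = 0"
  define j where "j = \<lfloor>x / (2 * T1)\<rfloor>"
  define y where "y = x - of_int j * (2 * T1)"
  have T: "2 * T1 > 0" using T1 by simp
  have y0: "0 \<le> y" unfolding y_def j_def using floor_divide_lower[OF T, of x] by simp
  have y1: "y < 2 * T1"
  proof -
    have "x / (2 * T1) < of_int j + 1" unfolding j_def by linarith
    then have "x < (of_int j + 1) * (2 * T1)" using T by (simp add: divide_less_eq)
    then show ?thesis unfolding y_def by (simp add: algebra_simps)
  qed
  have "p y = p (y + of_int j * (2 * T1))" by (rule p_per_int[symmetric])
  also have "y + of_int j * (2 * T1) = x" unfolding y_def by simp
  finally have "p y = 0" using px by simp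
  then have "y = 0 \<or> y = T1" using p_zero_base y0 y1 by blast
  then show "\<exists>k::int. x = of_int k * T1"
  proof
    assume "y = 0"
    then have "x = of_int (2 * j) * T1" unfolding y_def by simp
    then show ?thesis by blast
  next
    assume "y = T1"
    then have "x = of_int (2 * j + 1) * T1" unfolding y_def by (simp add: algebra_simps)
    then show ?thesis by blast
  qed
next
  assume "\<exists>k::int. x = of_int k * T1"
  then obtain k :: int where k: "x = of_int k * T1" by blast
  define j where "j = k div 2"
  have "k = 2 * j \<or> k = 2 * j + 1" unfolding j_def by presburger
  then show "p x = 0"
  proof
    assume "k = 2 * j"
    then have "x = 0 + of_int j * (2 * T1)" using k by simp
    then show ?thesis using p_per_int[of 0 j] p0 by simp
  next
    assume "k = 2 * j + 1"
    then have "x = T1 + of_int j * (2 * T1)" using k by (simp add: algebra_simps)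
    then show ?thesis using p_per_int[of T1 j] T1(2) by simp
  qed
qed

lemma period: "undul_period f = 2 * T1"
proof -
  have mem: "2 * T1 \<in> {t. t > 0 \<and> is_local_min f t}"
  proof -
    have "f (2 * T1) = r1" using f_per[of 0] f0 by simp
    then have "is_local_min f (2 * T1)" unfolding is_local_min_def using f_range
      by (intro exI[of _ 1]) auto
    then show ?thesis using T1 by simp
  qed
  have low: "2 * T1 \<le> t" if "t \<in> {t. t > 0 \<and> is_local_min f t}" for t
  proof (rule ccontr)
    assume "\<not> 2 * T1 \<le> t"
    then have t: "0 < t" "t < 2 * T1" and lm: "is_local_min f t" using that by auto
    obtain e where e: "e > 0" "\<And>y. \<bar>y - t\<bar> < e \<Longrightarrow> f t \<le> f y" using lm unfolding is_local_min_def by blast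
    have "p t = 0" using DERIV_local_min[OF Df[of t] e(1)] e(2) by (simp add: abs_minus_commute)
    then have tT: "t = T1" using p_zero_base[of t] t by simp
    define y where "y = T1 - min e T1 / 2"
    have "\<bar>y - t\<bar> < e" "0 \<le> y" "y < T1" unfolding y_def using tT e T1(1) by auto
    then have "f t \<le> f y" "f y < f T1" using e(2) f_strict[of y T1] by auto
    then show False using tT by simp
  qed
  show ?thesis unfolding undul_period_def by (rule cInf_eq_minimum[OF mem low])
qed

end



context undul
begin

lemma part2: "undul_a f x = 0 \<longleftrightarrow> (\<exists>k::int. x = of_int k * undul_period f / 2)"
proof -
  have "undul_a f x = 0 \<longleftrightarrow> p x = 0" unfolding a_eq using sq_pos[of x] by simp
  also have "\<dots> \<longleftrightarrow> (\<exists>k::int. x = of_int k * T1)" by (rule p_zero_char)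
  finally show ?thesis unfolding period by simp
qed

lemma da_zero_iff: "deriv (undul_a f) z = 0 \<longleftrightarrow> f z = ts"
  unfolding deriv_a using dg_zero_iff[OF fpos[of z]] by simp

lemma part3: "\<exists>z1 z2. 0 < z1 \<and> z1 < undul_period f / 2 \<and> undul_period f / 2 < z2
          \<and> z2 < undul_period f
          \<and> {z \<in> {0..undul_period f}. deriv (undul_a f) z = 0} = {z1, z2}"
proof -
  have ts1: "f 0 \<le> ts" "ts \<le> f T1" using f0 fT1 roots by auto
  obtain z1 where z1: "z1 \<ge> 0" "z1 \<le> T1" "f z1 = ts"
    using IVT'[of f 0 ts T1] ts1 T1(1) continuous_on_subset[OF f_cont] by fastforce
  have z1ne: "z1 \<noteq> 0" "z1 \<noteq> T1" using z1 f0 fT1 roots by auto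
  have uniq: "z = z1" if "0 \<le> z" "z \<le> T1" "f z = ts" for z
  proof (rule ccontr)
    assume "z \<noteq> z1"
    then consider "z < z1" | "z1 < z" by linarith
    then show False
    proof cases
      case 1 then show False using f_strict[of z z1] that z1 by simp
    next
      case 2 then show False using f_strict[of z1 z] that z1 by simp
    qed
  qed
  define z2 where "z2 = 2 * T1 - z1"
  have fz2: "f z2 = ts" unfolding z2_def using refl[OF T1(2), of z1] z1 by simp
  have "{z \<in> {0..2 * T1}. deriv (undul_a f) z = 0} = {z1, z2}"
  proof (rule set_eqI)
    fix z
    show "z \<in> {z \<in> {0..2 * T1}. deriv (undul_a f) z = 0} \<longleftrightarrow> z \<in> {z1, z2}"
    proof
      assume "z \<in> {z \<in> {0..2 * T1}. deriv (undul_a f) z = 0}"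
      then have z: "0 \<le> z" "z \<le> 2 * T1" "f z = ts" using da_zero_iff by auto
      show "z \<in> {z1, z2}"
      proof (cases "z \<le> T1")
        case True then show ?thesis using uniq z by simp
      next
        case False
        have "f (2 * T1 - z) = ts" using refl[OF T1(2), of z] z by simp
        then have "2 * T1 - z = z1" using uniq[of "2 * T1 - z"] z False by simp
        then show ?thesis unfolding z2_def by auto
      qed
    next
      assume "z \<in> {z1, z2}"
      then show "z \<in> {z \<in> {0..2 * T1}. deriv (undul_a f) z = 0}"
        using z1 fz2 da_zero_iff unfolding z2_def by auto
    qed
  qed
  then show ?thesis unfolding period using z1 z1ne unfolding z2_def
    by (intro exI[of _ z1] exI[of _ "2 * T1 - z1"]) auto
qed

end

lemma main_undul:
  fixes n :: nat and \<mu> :: real and f :: "real \<Rightarrow> real"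
  assumes n: "n \<ge> 2"
    and mu_pos: "0 < \<mu>"
    and mu_bound: "\<mu> < (1 / real n) * ((real n - 1) / real n) ^ (n - 1)"
    and smooth: "\<And>k x. ((deriv ^^ k) f) differentiable (at x)"
    and pos: "\<And>x. f x > 0"
    and nonconst: "\<exists>x y. f x \<noteq> f y"
    and ode: "\<And>x. \<mu> = (f x) ^ (n - 1) / sqrt (1 + (deriv f x)^2) - (f x) ^ n"
    and f0: "f 0 = a_minus n \<mu>"
  shows "(\<forall>x. rot_laplacian n f (undul_a f) x - undul_V n \<mu> f x * undul_a f x = 0)
    \<and> (\<forall>x. undul_a f x = 0 \<longleftrightarrow> (\<exists>k::int. x = real_of_int k * undul_period f / 2))
    \<and> (\<exists>z1 z2. 0 < z1 \<and> z1 < undul_period f / 2 \<and> undul_period f / 2 < z2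
          \<and> z2 < undul_period f
          \<and> {z \<in> {0..undul_period f}. deriv (undul_a f) z = 0} = {z1, z2})"
proof -
  obtain m where nm: "n = Suc m" using n by (cases n) auto
  have m1: "m \<ge> 1" using n nm by simp
  have s0: "f differentiable (at x)" for x using smooth[of 0 x] by simp
  have s1: "deriv f differentiable (at x)" for x using smooth[of 1 x] by simp
  have s2: "deriv (deriv f) differentiable (at x)" for x using smooth[of 2 x] by (simp add: numeral_2_eq_2)
  have gp: "gparams m \<mu>"
  proof
    show "1 \<le> m" by (rule m1)
    show "0 < \<mu>" by (rule mu_pos)
    show "\<mu> < 1 / real (Suc m) * (real m / real (Suc m)) ^ m" using mu_bound nm by simp
  qed
  interpret undul m \<mu> f
  proof unfold_locales
    show "1 \<le> m" by (rule m1)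
    show "0 < \<mu>" by (rule mu_pos)
    show "\<mu> < 1 / real (Suc m) * (real m / real (Suc m)) ^ m" using mu_bound nm by simp
    show "\<And>x. (f has_real_derivative deriv f x) (at x)" using s0 DERIV_deriv_iff_real_differentiable by blast
    show "\<And>x. (deriv f has_real_derivative deriv (deriv f) x) (at x)" using s1 DERIV_deriv_iff_real_differentiable by blast
    show "\<And>x. deriv (deriv f) differentiable (at x)" by (rule s2)
    show "\<And>x. f x > 0" by (rule pos)
    show "\<exists>x y. f x \<noteq> f y" by (rule nonconst)
    show "\<And>x. \<mu> = f x ^ m / sqrt (1 + (deriv f x)\<^sup>2) - f x ^ Suc m" using ode nm by simp
    show "f 0 = gparams.r1 m \<mu>" using f0 nm unfolding gparams.r1_def[OF gp] by simp
  qed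
  show ?thesis unfolding nm using lap part2 part3 by simp
qed

theorem lemma3p2:
  fixes n :: nat and \<mu> :: real and f :: "real \<Rightarrow> real"
  assumes n: "n \<ge> 2"
    and mu_pos: "0 < \<mu>"
    and mu_bound: "\<mu> < (1 / real n) * ((real n - 1) / real n) ^ (n - 1)"
    and smooth: "\<And>k x. ((deriv ^^ k) f) differentiable (at x)"
    and pos: "\<And>x. f x > 0"
    and nonconst: "\<exists>x y. f x \<noteq> f y"
    and ode: "\<And>x. \<mu> = (f x) ^ (n - 1) / sqrt (1 + (deriv f x)^2) - (f x) ^ n"
    and f0: "f 0 = a_minus n \<mu>"
  shows "(\<forall>x. rot_laplacian n f (undul_a f) x - undul_V n \<mu> f x * undul_a f x = 0)
    \<and> (\<forall>x. undul_a f x = 0 \<longleftrightarrow> (\<exists>k::int. x = real_of_int k * undul_period f / 2))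
    \<and> (\<exists>z1 z2. 0 < z1 \<and> z1 < undul_period f / 2 \<and> undul_period f / 2 < z2
          \<and> z2 < undul_period f
          \<and> {z \<in> {0..undul_period f}. deriv (undul_a f) z = 0} = {z1, z2})"
    using main_undul[OF assms] .

end
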